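(* The Greedy Maximizer policy is a $2$-approximation policy; that is, for every system with minimum average reward requirements $[q^*_X : X\in S]$ such that the same system with requirements $[2q^*_X]$ is strictly feasible, the Greedy Maximizer fulfills the system with requirements $[q^*_X]$.
   Context: A system consists of a finite set $S$ of tasks. Time is slotted, $t\in\{0,1,2,\dots\}$. Each task $X\in S$ has a period $\tau_X$ (a positive integer); time is partitioned into consecutive periods of $X$ of $\tau_X$ slots each, the first starting at $t=0$, and in each period $X$ has one job, removed at the end of the period. Let $T=\mathrm{lcm}\{\tau_X : X\in S\}$; time is partitioned into consecutive frames of $T$ slots each, the $k$-th frame ($k=1,2,\dots$) being the $k$-th such block starting from $t=0$. A scheduling policy chooses in each slot either to idle or to execute the job of exactly one task. Each task $X$ has rewards $r^1_X\ge r^2_X\ge\dots\ge r^{\tau_X}_X\ge 0$: executing the job of $X$ for the $i$-th time within a period yields reward $r^i_X$ to $X$. Let $s_X(t)$ be the total reward obtained by $X$ between time 0 and $t$; the average reward is $q_X=\liminf_{t\to\infty}s_X(t)/(t/T)$. Each task has a minimum requirement $q^*_X>0$; a policy fulfills the system if $q_X\ge q^*_X$ with probability 1 for all $X\in S$. The system is feasible if some policy fulfills it, and strictly feasible if there is $\epsilon>0$ such that the same system with requirements $[(1+\epsilon)q^*_X]$ is feasible. For $p\ge1$, a $p$-approximation policy is one that fulfills every system with requirements $[q^*_X]$ such that the same system with requirements $[p\,q^*_X]$ is strictly feasible. Let $\tilde q_X(k)$ be the total reward obtained by $X$ during the $k$-th frame. The debt of $X$ is $d_X(0)=0$, $d_X(k)=[d_X(k-1)+q^*_X-\tilde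 q_X(k)]^+$ for $k>0$, with $[x]^+=\max\{x,0\}$. The Greedy Maximizer policy is the following: at the start of each frame the debts are updated by the recursion above (initially all debts are $0$); during the frame, in each time slot, letting $i_X$ denote the number of times the job of $X$ has already been executed in its current period (reset to $0$ at the start of each period of $X$), the policy executes the job of a task $Y\in S$ maximizing $r^{i_Y+1}_Y\,d_Y$ over $X\in S$ (using the current debts $d_X$), with ties broken arbitrarily. *)

theory Defs
  imports Complex_Main "HOL-Library.Liminf_Limsup" "HOL-Library.Extended_Real"
begin

text \<open>Tasks have type 'a; the task set is S.  A schedule assigns to every time slot t
  either None (idle) or Some X (execute the job of task X).\<close>

definition frame_len :: "'a set \<Rightarrow> ('a \<Rightarrow> nat) \<Rightarrow> nat" where
  "frame_len S tau = Lcm (tau ` S)"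

definition valid_schedule :: "'a set \<Rightarrow> (nat \<Rightarrow> 'a option) \<Rightarrow> bool" where
  "valid_schedule S \<sigma> \<longleftrightarrow> (\<forall>t. \<sigma> t = None \<or> (\<exists>X\<in>S. \<sigma> t = Some X))"

text \<open>Number of times the job of X was executed in its current period before slot t
  (this is i_X at slot t).\<close>
definition execs :: "('a \<Rightarrow> nat) \<Rightarrow> (nat \<Rightarrow> 'a option) \<Rightarrow> 'a \<Rightarrow> nat \<Rightarrow> nat" where
  "execs tau \<sigma> X t = card {s. (t div tau X) * tau X \<le> s \<and> s < t \<and> \<sigma> s = Some X}"

text \<open>Reward obtained by X in slot s; r X i is r^i_X.\<close>
definition slot_reward ::
  "('a \<Rightarrow> nat) \<Rightarrow> ('a \<Rightarrow> nat \<Rightarrow> real) \<Rightarrow> (nat \<Rightarrow> 'a option) \<Rightarrow> 'a \<Rightarrow> nat \<Rightarrow> real" where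
  "slot_reward tau r \<sigma> X s = (if \<sigma> s = Some X then r X (execs tau \<sigma> X s + 1) else 0)"

definition total_reward ::
  "('a \<Rightarrow> nat) \<Rightarrow> ('a \<Rightarrow> nat \<Rightarrow> real) \<Rightarrow> (nat \<Rightarrow> 'a option) \<Rightarrow> 'a \<Rightarrow> nat \<Rightarrow> real" where
  "total_reward tau r \<sigma> X t = (\<Sum>s<t. slot_reward tau r \<sigma> X s)"

definition avg_reward ::
  "'a set \<Rightarrow> ('a \<Rightarrow> nat) \<Rightarrow> ('a \<Rightarrow> nat \<Rightarrow> real) \<Rightarrow> (nat \<Rightarrow> 'a option) \<Rightarrow> 'a \<Rightarrow> ereal" where
  "avg_reward S tau r \<sigma> X =
     liminf (\<lambda>t. ereal (total_reward tau r \<sigma> X t / (real t / real (frame_len S tau))))"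

definition fulfills ::
  "'a set \<Rightarrow> ('a \<Rightarrow> nat) \<Rightarrow> ('a \<Rightarrow> nat \<Rightarrow> real) \<Rightarrow> ('a \<Rightarrow> real) \<Rightarrow> (nat \<Rightarrow> 'a option) \<Rightarrow> bool" where
  "fulfills S tau r q \<sigma> \<longleftrightarrow> (\<forall>X\<in>S. ereal (q X) \<le> avg_reward S tau r \<sigma> X)"

definition feasible ::
  "'a set \<Rightarrow> ('a \<Rightarrow> nat) \<Rightarrow> ('a \<Rightarrow> nat \<Rightarrow> real) \<Rightarrow> ('a \<Rightarrow> real) \<Rightarrow> bool" where
  "feasible S tau r q \<longleftrightarrow> (\<exists>\<sigma>. valid_schedule S \<sigma> \<and> fulfills S tau r q \<sigma>)"

definition strictly_feasible ::
  "'a set \<Rightarrow> ('a \<Rightarrow> nat) \<Rightarrow> ('a \<Rightarrow> nat \<Rightarrow> real) \<Rightarrow> ('a \<Rightarrow> real) \<Rightarrow> bool" where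
  "strictly_feasible S tau r q \<longleftrightarrow> (\<exists>\<epsilon>>0. feasible S tau r (\<lambda>X. (1 + \<epsilon>) * q X))"

text \<open>Reward of X during the k-th frame (k \<ge> 1), i.e. slots (k-1)T,...,kT-1.\<close>
definition frame_reward ::
  "'a set \<Rightarrow> ('a \<Rightarrow> nat) \<Rightarrow> ('a \<Rightarrow> nat \<Rightarrow> real) \<Rightarrow> (nat \<Rightarrow> 'a option) \<Rightarrow> 'a \<Rightarrow> nat \<Rightarrow> real" where
  "frame_reward S tau r \<sigma> X k =
     (\<Sum>s\<in>{(k - 1) * frame_len S tau..<k * frame_len S tau}. slot_reward tau r \<sigma> X s)"

primrec debt ::
  "'a set \<Rightarrow> ('a \<Rightarrow> nat) \<Rightarrow> ('a \<Rightarrow> nat \<Rightarrow> real) \<Rightarrow> ('a \<Rightarrow> real) \<Rightarrow> (nat \<Rightarrow> 'a option)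
     \<Rightarrow> 'a \<Rightarrow> nat \<Rightarrow> real" where
  "debt S tau r q \<sigma> X 0 = 0"
| "debt S tau r q \<sigma> X (Suc k) =
     max 0 (debt S tau r q \<sigma> X k + q X - frame_reward S tau r \<sigma> X (Suc k))"

text \<open>sigma is a run of the Greedy Maximizer (with some tie-breaking): in slot t, which lies in
  frame (t div T) + 1, the current debts are d_X(t div T), and a task Y maximizing
  r^{i_Y+1}_Y d_Y is executed.\<close>
definition greedy_maximizer_schedule ::
  "'a set \<Rightarrow> ('a \<Rightarrow> nat) \<Rightarrow> ('a \<Rightarrow> nat \<Rightarrow> real) \<Rightarrow> ('a \<Rightarrow> real) \<Rightarrow> (nat \<Rightarrow> 'a option) \<Rightarrow> bool" where
  "greedy_maximizer_schedule S tau r q \<sigma> \<longleftrightarrow>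
     (\<forall>t. \<exists>Y\<in>S. \<sigma> t = Some Y \<and>
        (\<forall>X\<in>S. r X (execs tau \<sigma> X t + 1) * debt S tau r q \<sigma> X (t div frame_len S tau)
               \<le> r Y (execs tau \<sigma> Y t + 1) * debt S tau r q \<sigma> Y (t div frame_len S tau)))"

end

theory Submission
  imports Defs
begin


lemma r_mono_gen:
  assumes "\<forall>i. 1 \<le> i \<and> i < n \<longrightarrow> (f::nat\<Rightarrow>real) (i + 1) \<le> f i"
  shows "1 \<le> i \<Longrightarrow> i \<le> j \<Longrightarrow> j \<le> n \<Longrightarrow> f j \<le> f i"
proof (induction j)
  case 0 then show ?case by simp
next
  case (Suc j)
  show ?case
  proof (cases "i = Suc j")
    case True then show ?thesis by simp
  next
    case False
    then have "i \<le> j" using Suc by simp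
    then have "f j \<le> f i" using Suc by simp
    moreover have "f (j+1) \<le> f j" using assms Suc \<open>i\<le>j\<close> by simp
    ultimately show ?thesis by simp
  qed
qed

lemma execs_le: "execs tau \<sigma> X t \<le> t mod tau X"
proof -
  have "{s. (t div tau X) * tau X \<le> s \<and> s < t \<and> \<sigma> s = Some X} \<subseteq> {(t div tau X) * tau X..<t}" by auto
  then have "execs tau \<sigma> X t \<le> card {(t div tau X) * tau X..<t}" unfolding execs_def by (intro card_mono) auto
  also have "... = t mod tau X" by (simp add: minus_div_mult_eq_mod)
  finally show ?thesis .
qed

lemma execs_less: "0 < tau X \<Longrightarrow> execs tau \<sigma> X t < tau X"
  using execs_le[of tau \<sigma> X t] mod_less_divisor[of "tau X" t] by linarith

lemma ivt_card:
  fixes p :: "nat \<Rightarrow> bool"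
  shows "P0 \<le> t \<Longrightarrow> e < card {x. P0 \<le> x \<and> x < t \<and> p x} \<Longrightarrow>
    \<exists>s. P0 \<le> s \<and> s < t \<and> p s \<and> card {x. P0 \<le> x \<and> x < s \<and> p x} = e"
proof (induction t)
  case 0 then show ?case by simp
next
  case (Suc t)
  show ?case
  proof (cases "P0 \<le> t")
    case False then have "P0 = Suc t" using Suc by simp
    then have emp: "{x. P0 \<le> x \<and> x < Suc t \<and> p x} = {}" by auto
    show ?thesis using Suc.prems(2) unfolding emp by simp
  next
    case le: True
    have fin: "finite {x. P0 \<le> x \<and> x < t \<and> p x}" by (rule finite_subset[of _ "{..<t}"]) auto
    show ?thesis
    proof (cases "e < card {x. P0 \<le> x \<and> x < t \<and> p x}")
      case True then obtain s where "P0 \<le> s \<and> s < t \<and> p s \<and> card {x. P0 \<le> x \<and> x < s \<and> p x} = e"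
        using Suc.IH le by blast
      then show ?thesis by (intro exI[of _ s]) auto
    next
      case False
      show ?thesis
      proof (cases "p t")
        case True
        have eq: "{x. P0 \<le> x \<and> x < Suc t \<and> p x} = insert t {x. P0 \<le> x \<and> x < t \<and> p x}"
          using True le by auto
        have "card {x. P0 \<le> x \<and> x < Suc t \<and> p x} = Suc (card {x. P0 \<le> x \<and> x < t \<and> p x})"
          unfolding eq using fin by simp
        then have "card {x. P0 \<le> x \<and> x < t \<and> p x} = e" using False Suc.prems by simp
        then show ?thesis using True le by (intro exI[of _ t]) auto
      next
        case pf: False
        have eq: "{x. P0 \<le> x \<and> x < Suc t \<and> p x} = {x. P0 \<le> x \<and> x < t \<and> p x}"
          using pf by (auto simp: less_Suc_eq)
        then show ?thesis using False Suc.prems by simp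
      qed
    qed
  qed
qed

lemma div_same_period:
  assumes "(t div k) * k \<le> s" "s \<le> t" "0 < (k::nat)"
  shows "s div k = t div k"
proof -
  have "t div k = ((t div k) * k) div k" using assms by simp
  also have "... \<le> s div k" by (rule div_le_mono) (rule assms(1))
  finally show ?thesis using div_le_mono[OF assms(2), of k] by simp
qed

lemma dvd_le_start:
  assumes "k dvd a" "a \<le> t" "0 < (k::nat)"
  shows "a \<le> (t div k) * k"
proof -
  obtain c where c: "a = k * c" using assms by blast
  have "c = a div k" using c assms by simp
  also have "... \<le> t div k" by (rule div_le_mono) (rule assms(2))
  finally show ?thesis using c by (simp add: mult.commute)
qed

lemma execs_period:
  assumes "(t div k) * k \<le> s" "s \<le> t" "0 < (k::nat)" "tau X = k"
  shows "execs tau \<sigma> X s = card {x. (t div k) * k \<le> x \<and> x < s \<and> \<sigma> x = Some X}"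
  using div_same_period[OF assms(1-3)] assms(4) unfolding execs_def by simp

lemma execs_strict:
  assumes "\<rho> t = Some Y" "t < t'" "t div tau Y = t' div tau Y" "0 < tau Y"
  shows "execs tau \<rho> Y t < execs tau \<rho> Y t'"
proof -
  let ?P = "(t' div tau Y) * tau Y"
  have A: "{s. (t div tau Y) * tau Y \<le> s \<and> s < t \<and> \<rho> s = Some Y} \<subset> {s. ?P \<le> s \<and> s < t' \<and> \<rho> s = Some Y}"
  proof
    show "{s. (t div tau Y) * tau Y \<le> s \<and> s < t \<and> \<rho> s = Some Y} \<subseteq> {s. ?P \<le> s \<and> s < t' \<and> \<rho> s = Some Y}"
      using assms by auto
    have "t \<in> {s. ?P \<le> s \<and> s < t' \<and> \<rho> s = Some Y}"
      using assms by (metis (mono_tags, lifting) div_times_less_eq_dividend mem_Collect_eq)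
    then show "{s. (t div tau Y) * tau Y \<le> s \<and> s < t \<and> \<rho> s = Some Y} \<noteq> {s. ?P \<le> s \<and> s < t' \<and> \<rho> s = Some Y}"
      by auto
  qed
  have "finite {s. ?P \<le> s \<and> s < t' \<and> \<rho> s = Some Y}" by (rule finite_subset[of _ "{..<t'}"]) auto
  then show ?thesis unfolding execs_def using psubset_card_mono[OF _ A] by simp
qed

lemma execs_shift:
  assumes "tau X dvd a" "0 < tau X"
  shows "execs tau \<rho> X (t + a) = card {u. (t div tau X) * tau X \<le> u \<and> u < t \<and> \<rho> (u + a) = Some X}"
proof -
  obtain c where c: "a = tau X * c" using assms by blast
  have d: "((t + a) div tau X) * tau X = (t div tau X) * tau X + a"
    using assms c by (simp add: algebra_simps)
  have "{s. ((t + a) div tau X) * tau X \<le> s \<and> s < t + a \<and> \<rho> s = Some X}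
      = (\<lambda>u. u + a) ` {u. (t div tau X) * tau X \<le> u \<and> u < t \<and> \<rho> (u + a) = Some X}"
    unfolding d
  proof (auto, goal_cases)
    case (1 s)
    then show ?case by (intro image_eqI[where x="s - a"]) auto
  qed
  then show ?thesis unfolding execs_def by (simp add: card_image)
qed



locale gm =
  fixes S :: "'a set" and tau :: "'a \<Rightarrow> nat" and r :: "'a \<Rightarrow> nat \<Rightarrow> real" and q :: "'a \<Rightarrow> real"
  assumes fin: "finite S"
    and taupos: "\<forall>X\<in>S. tau X > 0"
    and rdec: "\<forall>X\<in>S. \<forall>i. 1 \<le> i \<and> i < tau X \<longrightarrow> r X (i + 1) \<le> r X i"
    and rnn: "\<forall>X\<in>S. \<forall>i. 1 \<le> i \<and> i \<le> tau X \<longrightarrow> 0 \<le> r X i"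
    and qpos: "\<forall>X\<in>S. q X > 0"
begin

abbreviation "T \<equiv> frame_len S tau"

lemma T_pos: "T > 0"
proof -
  have "finite (tau ` S)" using fin by simp
  moreover have "0 \<notin> tau ` S" using taupos by auto
  ultimately show ?thesis unfolding frame_len_def using Lcm_0_iff_nat by (metis gr0I)
qed

lemma tau_dvd_T: "X \<in> S \<Longrightarrow> tau X dvd T"
  unfolding frame_len_def by (rule dvd_Lcm) simp

lemma r_mono: "X \<in> S \<Longrightarrow> 1 \<le> i \<Longrightarrow> i \<le> j \<Longrightarrow> j \<le> tau X \<Longrightarrow> r X j \<le> r X i"
  using r_mono_gen[of "tau X" "r X" i j] rdec by blast

lemma r_exec_nn: "X \<in> S \<Longrightarrow> 0 \<le> r X (execs tau \<sigma> X t + 1)"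
  using rnn execs_less[of tau X \<sigma> t] taupos by (simp add: Suc_leI)

lemma r_exec_le: "X \<in> S \<Longrightarrow> r X (execs tau \<sigma> X t + 1) \<le> r X 1"
  using r_mono[of X 1 "execs tau \<sigma> X t + 1"] execs_less[of tau X \<sigma> t] taupos by (simp add: Suc_leI)

lemma slot_nn: "X \<in> S \<Longrightarrow> 0 \<le> slot_reward tau r \<sigma> X t"
  unfolding slot_reward_def using r_exec_nn by simp

lemma r1_nn: "X \<in> S \<Longrightarrow> 0 \<le> r X 1"
  using rnn taupos by (simp add: Suc_leI)

lemma slot_le: "X \<in> S \<Longrightarrow> slot_reward tau r \<sigma> X t \<le> r X 1"
  unfolding slot_reward_def using r_exec_le r1_nn by simp

lemma FR_nn: "X \<in> S \<Longrightarrow> 0 \<le> frame_reward S tau r \<sigma> X k"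
  unfolding frame_reward_def by (intro sum_nonneg) (simp add: slot_nn)

lemma FR_le: "X \<in> S \<Longrightarrow> frame_reward S tau r \<sigma> X (Suc k) \<le> real T * r X 1"
proof -
  assume X: "X \<in> S"
  have "frame_reward S tau r \<sigma> X (Suc k) \<le> (\<Sum>s\<in>{(Suc k - 1) * T..<Suc k * T}. r X 1)"
    unfolding frame_reward_def using X slot_le by (intro sum_mono) blast
  also have "... = real T * r X 1" by simp
  finally show ?thesis .
qed

definition wv :: "('a \<Rightarrow> real) \<Rightarrow> (nat \<Rightarrow> 'a option) \<Rightarrow> nat \<Rightarrow> real" where
  "wv w \<rho> t = (\<Sum>X\<in>S. w X * slot_reward tau r \<rho> X t)"

lemma wv_Some: "\<rho> t = Some Y \<Longrightarrow> Y \<in> S \<Longrightarrow> wv w \<rho> t = w Y * r Y (execs tau \<rho> Y t + 1)"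
proof -
  assume a: "\<rho> t = Some Y" "Y \<in> S"
  have "wv w \<rho> t = (\<Sum>X\<in>S. if Y = X then w Y * r Y (execs tau \<rho> Y t + 1) else 0)"
    unfolding wv_def by (intro sum.cong) (auto simp: slot_reward_def a)
  also have "... = w Y * r Y (execs tau \<rho> Y t + 1)" using a fin by simp
  finally show ?thesis .
qed

lemma wv_None: "\<rho> t = None \<Longrightarrow> wv w \<rho> t = 0"
  unfolding wv_def slot_reward_def by simp

lemma wv_nn: "\<forall>X\<in>S. 0 \<le> w X \<Longrightarrow> 0 \<le> wv w \<rho> t"
  unfolding wv_def by (intro sum_nonneg) (simp add: slot_nn)

lemma sum_FR_wv: "(\<Sum>X\<in>S. w X * frame_reward S tau r \<rho> X (Suc m)) = (\<Sum>t\<in>{m*T..<m*T+T}. wv w \<rho> t)"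
  unfolding frame_reward_def wv_def
  by (simp add: sum_distrib_left add.commute) (rule sum.swap)

lemma greedy2:
  assumes w: "\<forall>X\<in>S. 0 \<le> w X"
    and a: "\<forall>X\<in>S. tau X dvd a"
    and g: "\<forall>t\<in>{a..<b}. \<exists>Y\<in>S. \<sigma> t = Some Y \<and> (\<forall>X\<in>S. r X (execs tau \<sigma> X t + 1) * w X \<le> r Y (execs tau \<sigma> Y t + 1) * w Y)"
    and v: "\<forall>t\<in>{a..<b}. \<rho> t = None \<or> (\<exists>Y\<in>S. \<rho> t = Some Y)"
  shows "(\<Sum>t\<in>{a..<b}. wv w \<rho> t) \<le> 2 * (\<Sum>t\<in>{a..<b}. wv w \<sigma> t)"
proof -
  let ?F = "{a..<b}"
  define B where "B = {t\<in>?F. \<exists>Y. \<rho> t = Some Y \<and> execs tau \<rho> Y t < execs tau \<sigma> Y t}"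
  define P where "P t s \<longleftrightarrow> \<sigma> s = \<rho> t \<and> s < t \<and> (t div tau (the (\<rho> t))) * tau (the (\<rho> t)) \<le> s
      \<and> execs tau \<sigma> (the (\<rho> t)) s = execs tau \<rho> (the (\<rho> t)) t" for t s
  define phi where "phi t = (SOME s. P t s)" for t
  have ex: "\<exists>s. P t s" if t: "t \<in> B" for t
  proof -
    obtain Y where Y: "\<rho> t = Some Y" "execs tau \<rho> Y t < execs tau \<sigma> Y t" "t \<in> ?F"
      using t unfolding B_def by blast
    have YS: "Y \<in> S" using v[rule_format, OF Y(3)] Y(1) by auto
    have tp: "0 < tau Y" using taupos YS by simp
    let ?P0 = "(t div tau Y) * tau Y"
    have "execs tau \<rho> Y t < card {x. ?P0 \<le> x \<and> x < t \<and> \<sigma> x = Some Y}"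
      using Y(2) unfolding execs_def .
    then obtain s where s: "?P0 \<le> s" "s < t" "\<sigma> s = Some Y"
        "card {x. ?P0 \<le> x \<and> x < s \<and> \<sigma> x = Some Y} = execs tau \<rho> Y t"
      using ivt_card[of ?P0 t "execs tau \<rho> Y t" "\<lambda>x. \<sigma> x = Some Y"] by auto
    have "execs tau \<sigma> Y s = execs tau \<rho> Y t"
      using execs_period[of t "tau Y" s tau Y \<sigma>] s tp by simp
    then have "P t s" unfolding P_def using s Y by simp
    then show ?thesis by blast
  qed
  have Pphi: "P t (phi t)" if "t \<in> B" for t
    unfolding phi_def using ex[OF that] by (rule someI_ex)
  have phiF: "phi t \<in> ?F" if t: "t \<in> B" for t
  proof -
    obtain Y where Y: "\<rho> t = Some Y" "t \<in> ?F" using t unfolding B_def by blast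
    have YS: "Y \<in> S" using v[rule_format, OF Y(2)] Y(1) by auto
    have "a \<le> (t div tau Y) * tau Y"
      using dvd_le_start[of "tau Y" a t] a YS taupos Y by auto
    then show ?thesis using Pphi[OF t] Y unfolding P_def by auto
  qed
  have phival: "wv w \<sigma> (phi t) = wv w \<rho> t" if t: "t \<in> B" for t
  proof -
    obtain Y where Y: "\<rho> t = Some Y" "t \<in> ?F" using t unfolding B_def by blast
    have YS: "Y \<in> S" using v[rule_format, OF Y(2)] Y(1) by auto
    have "\<sigma> (phi t) = Some Y" "execs tau \<sigma> Y (phi t) = execs tau \<rho> Y t"
      using Pphi[OF t] Y unfolding P_def by auto
    then show ?thesis using wv_Some Y YS by simp
  qed
  have inj: "inj_on phi B"
  proof (rule inj_onI)
    fix t t' assume t: "t \<in> B" and t': "t' \<in> B" and eq: "phi t = phi t'"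
    obtain Y where Y: "\<rho> t = Some Y" "t \<in> ?F" using t unfolding B_def by blast
    obtain Y' where Y': "\<rho> t' = Some Y'" "t' \<in> ?F" using t' unfolding B_def by blast
    have YS: "Y \<in> S" using v[rule_format, OF Y(2)] Y(1) by auto
    have tp: "0 < tau Y" using taupos YS by simp
    have P1: "P t (phi t)" and P2: "P t' (phi t)" using Pphi[OF t] Pphi[OF t'] eq by auto
    have "Y' = Y" using P1 P2 Y Y' unfolding P_def by auto
    have d1: "phi t div tau Y = t div tau Y"
      using P1 Y tp unfolding P_def by (intro div_same_period) auto
    have d2: "phi t div tau Y = t' div tau Y"
      using P2 Y' \<open>Y' = Y\<close> tp unfolding P_def by (intro div_same_period) auto
    have e1: "execs tau \<sigma> Y (phi t) = execs tau \<rho> Y t" using P1 Y unfolding P_def by auto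
    have e2: "execs tau \<sigma> Y (phi t) = execs tau \<rho> Y t'" using P2 Y' \<open>Y' = Y\<close> unfolding P_def by auto
    show "t = t'"
    proof (rule ccontr)
      assume "t \<noteq> t'"
      then consider "t < t'" | "t' < t" by linarith
      then show False
      proof cases
        case 1 then show False using execs_strict[of \<rho> t Y t' tau] Y d1 d2 tp e1 e2 by simp
      next
        case 2 then show False using execs_strict[of \<rho> t' Y t tau] Y' \<open>Y' = Y\<close> d1 d2 tp e1 e2 by simp
      qed
    qed
  qed
  have ptw: "wv w \<rho> t \<le> wv w \<sigma> t + (if t \<in> B then wv w \<sigma> (phi t) else 0)" if t: "t \<in> ?F" for t
  proof -
    obtain Z where Z: "Z \<in> S" "\<sigma> t = Some Z"
      "\<forall>X\<in>S. r X (execs tau \<sigma> X t + 1) * w X \<le> r Z (execs tau \<sigma> Z t + 1) * w Z"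
      using g t by blast
    have sg: "wv w \<sigma> t = w Z * r Z (execs tau \<sigma> Z t + 1)" using wv_Some Z by simp
    have sgnn: "0 \<le> wv w \<sigma> t" using wv_nn w by simp
    show ?thesis
    proof (cases "t \<in> B")
      case True then show ?thesis using phival sgnn by simp
    next
      case False
      show ?thesis
      proof (cases "\<rho> t")
        case None then show ?thesis using wv_None sgnn False by simp
      next
        case (Some Y)
        have YS: "Y \<in> S" using v[rule_format, OF t] Some by auto
        have le: "execs tau \<sigma> Y t \<le> execs tau \<rho> Y t" using False Some t unfolding B_def by auto
        have "r Y (execs tau \<rho> Y t + 1) \<le> r Y (execs tau \<sigma> Y t + 1)"
          using r_mono[of Y "execs tau \<sigma> Y t + 1" "execs tau \<rho> Y t + 1"] le
            execs_less[of tau Y \<rho> t] taupos YS by (simp add: Suc_leI)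
        then have "w Y * r Y (execs tau \<rho> Y t + 1) \<le> w Y * r Y (execs tau \<sigma> Y t + 1)"
          using w YS by (simp add: mult_left_mono)
        also have "... \<le> wv w \<sigma> t" using Z(3) YS sg by (simp add: mult.commute)
        finally show ?thesis using wv_Some[of \<rho> t Y w, OF Some YS] False by simp
      qed
    qed
  qed
  have BF: "B \<subseteq> ?F" unfolding B_def by auto
  have "(\<Sum>t\<in>?F. wv w \<rho> t) \<le> (\<Sum>t\<in>?F. wv w \<sigma> t + (if t \<in> B then wv w \<sigma> (phi t) else 0))"
    using ptw by (intro sum_mono) simp
  also have "... = (\<Sum>t\<in>?F. wv w \<sigma> t) + (\<Sum>t\<in>B. wv w \<sigma> (phi t))"
    using BF by (simp add: sum.distrib sum.inter_restrict[symmetric] Int_absorb1)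
  also have "(\<Sum>t\<in>B. wv w \<sigma> (phi t)) = (\<Sum>s\<in>phi ` B. wv w \<sigma> s)"
    using inj by (simp add: sum.reindex)
  also have "... \<le> (\<Sum>t\<in>?F. wv w \<sigma> t)"
    using phiF wv_nn w by (intro sum_mono2) auto
  finally show ?thesis by simp
qed

end


context gm begin

lemma total_frames: "total_reward tau r \<rho> X (K * T) = (\<Sum>k<K. frame_reward S tau r \<rho> X (Suc k))"
proof (induction K)
  case 0 then show ?case by (simp add: total_reward_def)
next
  case (Suc K)
  have "total_reward tau r \<rho> X (Suc K * T) = total_reward tau r \<rho> X (K * T) + (\<Sum>s\<in>{K*T..<Suc K * T}. slot_reward tau r \<rho> X s)"
    unfolding total_reward_def lessThan_atLeast0
    by (rule sum.atLeastLessThan_concat[symmetric]) auto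
  then show ?case using Suc by (simp add: frame_reward_def)
qed

lemma FR_shift:
  assumes "\<forall>u. \<rho>' (u + m*T) = \<rho> (u + k*T)" "X \<in> S"
  shows "frame_reward S tau r \<rho>' X (Suc m) = frame_reward S tau r \<rho> X (Suc k)"
proof -
  have tp: "0 < tau X" using taupos assms by simp
  have d1: "tau X dvd m*T" and d2: "tau X dvd k*T" using tau_dvd_T[OF assms(2)] by auto
  have sl: "slot_reward tau r \<rho>' X (u + m*T) = slot_reward tau r \<rho> X (u + k*T)" for u
  proof -
    have "execs tau \<rho>' X (u + m*T) = execs tau \<rho> X (u + k*T)"
      unfolding execs_shift[where tau=tau and X=X and a="m*T" and \<rho>=\<rho>' and t=u, OF d1 tp]
        execs_shift[where tau=tau and X=X and a="k*T" and \<rho>=\<rho> and t=u, OF d2 tp] using assms(1) by simp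
    then show ?thesis unfolding slot_reward_def using assms(1) by simp
  qed
  have "frame_reward S tau r \<rho>' X (Suc m) = (\<Sum>u\<in>{0..<T}. slot_reward tau r \<rho>' X (u + m*T))"
    unfolding frame_reward_def using sum.shift_bounds_nat_ivl[of "slot_reward tau r \<rho>' X" 0 "m*T" T]
    by (simp add: add.commute)
  also have "... = (\<Sum>u\<in>{0..<T}. slot_reward tau r \<rho> X (u + k*T))" using sl by simp
  also have "... = frame_reward S tau r \<rho> X (Suc k)"
    unfolding frame_reward_def using sum.shift_bounds_nat_ivl[of "slot_reward tau r \<rho> X" 0 "k*T" T]
    by (simp add: add.commute)
  finally show ?thesis .
qed

lemma feasible_frame:
  assumes fulf: "fulfills S tau r q' \<rho>"
    and w: "\<forall>X\<in>S. 0 \<le> w X" and eta: "\<eta> > 0"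
  shows "\<exists>k. (\<Sum>X\<in>S. w X * q' X) - \<eta> \<le> (\<Sum>X\<in>S. w X * frame_reward S tau r \<rho> X (Suc k))"
proof (rule ccontr)
  assume "\<not> ?thesis"
  then have all: "\<forall>k. (\<Sum>X\<in>S. w X * frame_reward S tau r \<rho> X (Suc k)) < (\<Sum>X\<in>S. w X * q' X) - \<eta>"
    by (simp add: not_le)
  define c where "c = (\<Sum>X\<in>S. w X * q' X)"
  define W where "W = (\<Sum>X\<in>S. w X)"
  have W0: "0 \<le> W" unfolding W_def using w by (simp add: sum_nonneg)
  define \<delta> where "\<delta> = \<eta> / (W + 1)"
  have dpos: "\<delta> > 0" unfolding \<delta>_def using eta W0 by simp
  have dW: "\<delta> * W < \<eta>"
  proof -
    have "\<delta> * W = \<eta> * (W / (W + 1))" unfolding \<delta>_def by simp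
    also have "... < \<eta> * 1" using eta W0 by (intro mult_strict_left_mono) auto
    finally show ?thesis by simp
  qed
  have ev: "\<forall>X\<in>S. eventually (\<lambda>t. ereal (q' X - \<delta>) < ereal (total_reward tau r \<rho> X t / (real t / real T))) sequentially"
  proof
    fix X assume X: "X \<in> S"
    have "ereal (q' X) \<le> liminf (\<lambda>t. ereal (total_reward tau r \<rho> X t / (real t / real T)))"
      using fulf X unfolding fulfills_def avg_reward_def by blast
    then have "\<forall>y<ereal (q' X). eventually (\<lambda>t. y < ereal (total_reward tau r \<rho> X t / (real t / real T))) sequentially"
      unfolding le_Liminf_iff .
    moreover have "ereal (q' X - \<delta>) < ereal (q' X)" using dpos by simp
    ultimately show "eventually (\<lambda>t. ereal (q' X - \<delta>) < ereal (total_reward tau r \<rho> X t / (real t / real T))) sequentially"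
      by blast
  qed
  have "eventually (\<lambda>t. \<forall>X\<in>S. ereal (q' X - \<delta>) < ereal (total_reward tau r \<rho> X t / (real t / real T))) sequentially"
    using eventually_ball_finite[OF fin ev] .
  then obtain N where N: "\<And>t. t \<ge> N \<Longrightarrow> \<forall>X\<in>S. q' X - \<delta> < total_reward tau r \<rho> X t / (real t / real T)"
    unfolding eventually_sequentially by auto
  define K where "K = Suc N"
  have Tp: "T > 0" by (rule T_pos)
  have "K \<le> K * T" using Tp by simp
  then have KT: "K * T \<ge> N" unfolding K_def by linarith
  have Kpos: "real K > 0" unfolding K_def by simp
  have tot: "real K * (q' X - \<delta>) \<le> total_reward tau r \<rho> X (K * T)" if X: "X \<in> S" for X
  proof -
    have "q' X - \<delta> < total_reward tau r \<rho> X (K * T) / (real (K * T) / real T)" using N[OF KT] X by blast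
    also have "real (K * T) / real T = real K" using Tp by simp
    finally show ?thesis using Kpos by (simp add: field_simps)
  qed
  have "real K * (c - \<delta> * W) = (\<Sum>X\<in>S. w X * (real K * (q' X - \<delta>)))"
  proof -
    have "(\<Sum>X\<in>S. w X * (real K * (q' X - \<delta>))) = (\<Sum>X\<in>S. real K * (w X * q' X) - (real K * \<delta>) * w X)"
      by (intro sum.cong) (auto simp: algebra_simps)
    also have "... = real K * c - (real K * \<delta>) * W"
      unfolding c_def W_def by (simp add: sum_subtractf sum_distrib_left)
    finally show ?thesis by (simp add: algebra_simps)
  qed
  also have "... \<le> (\<Sum>X\<in>S. w X * total_reward tau r \<rho> X (K * T))"
    using tot w by (intro sum_mono mult_left_mono) auto
  also have "... = (\<Sum>k<K. \<Sum>X\<in>S. w X * frame_reward S tau r \<rho> X (Suc k))"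
    unfolding total_frames by (simp add: sum_distrib_left) (rule sum.swap)
  also have "... \<le> (\<Sum>k<K. c - \<eta>)" using all unfolding c_def by (intro sum_mono) (simp add: less_imp_le)
  also have "... = real K * (c - \<eta>)" by simp
  finally have "real K * (c - \<delta> * W) \<le> real K * (c - \<eta>)" .
  then have "c - \<delta> * W \<le> c - \<eta>" using Kpos by simp
  then show False using dW by simp
qed

lemma greedy_frame:
  assumes gr: "greedy_maximizer_schedule S tau r q \<sigma>"
    and vr: "valid_schedule S \<rho>" and fr: "fulfills S tau r (\<lambda>X. (1 + \<epsilon>) * (2 * q X)) \<rho>"
  shows "(1+\<epsilon>) * (\<Sum>X\<in>S. debt S tau r q \<sigma> X m * q X)
     \<le> (\<Sum>X\<in>S. debt S tau r q \<sigma> X m * frame_reward S tau r \<sigma> X (Suc m))"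
proof -
  define w where "w X = debt S tau r q \<sigma> X m" for X
  have w: "\<forall>X\<in>S. 0 \<le> w X" unfolding w_def by (cases m) auto
  have Tp: "T > 0" by (rule T_pos)
  have main: "2 * ((1+\<epsilon>) * (\<Sum>X\<in>S. w X * q X)) \<le> 2 * (\<Sum>X\<in>S. w X * frame_reward S tau r \<sigma> X (Suc m)) + \<eta>"
    if eta: "\<eta> > 0" for \<eta>
  proof -
    obtain k where k: "(\<Sum>X\<in>S. w X * ((1 + \<epsilon>) * (2 * q X))) - \<eta> \<le> (\<Sum>X\<in>S. w X * frame_reward S tau r \<rho> X (Suc k))"
      using feasible_frame[OF fr w eta] by blast
    define \<rho>' where "\<rho>' t = \<rho> (t + k*T - m*T)" for t
    have sh: "\<forall>u. \<rho>' (u + m*T) = \<rho> (u + k*T)" unfolding \<rho>'_def by simp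
    have "(\<Sum>X\<in>S. w X * frame_reward S tau r \<rho> X (Suc k)) = (\<Sum>X\<in>S. w X * frame_reward S tau r \<rho>' X (Suc m))"
      using FR_shift[OF sh] by simp
    also have "... = (\<Sum>t\<in>{m*T..<m*T+T}. wv w \<rho>' t)" by (rule sum_FR_wv)
    also have "... \<le> 2 * (\<Sum>t\<in>{m*T..<m*T+T}. wv w \<sigma> t)"
    proof (rule greedy2[OF w])
      show "\<forall>X\<in>S. tau X dvd m * T" using tau_dvd_T by auto
      show "\<forall>t\<in>{m * T..<m * T + T}. \<rho>' t = None \<or> (\<exists>Y\<in>S. \<rho>' t = Some Y)"
        using vr unfolding valid_schedule_def \<rho>'_def by blast
      show "\<forall>t\<in>{m * T..<m * T + T}. \<exists>Y\<in>S. \<sigma> t = Some Y \<and> (\<forall>X\<in>S. r X (execs tau \<sigma> X t + 1) * w X \<le> r Y (execs tau \<sigma> Y t + 1) * w Y)"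
      proof
        fix t assume t: "t \<in> {m * T..<m * T + T}"
        have "t div T = m" using t by (intro div_nat_eqI) (auto simp: mult.commute)
        then show "\<exists>Y\<in>S. \<sigma> t = Some Y \<and> (\<forall>X\<in>S. r X (execs tau \<sigma> X t + 1) * w X \<le> r Y (execs tau \<sigma> Y t + 1) * w Y)"
          using gr unfolding greedy_maximizer_schedule_def w_def by metis
      qed
    qed
    also have "(\<Sum>t\<in>{m*T..<m*T+T}. wv w \<sigma> t) = (\<Sum>X\<in>S. w X * frame_reward S tau r \<sigma> X (Suc m))"
      by (rule sum_FR_wv[symmetric])
    finally have "(\<Sum>X\<in>S. w X * ((1 + \<epsilon>) * (2 * q X))) - \<eta> \<le> 2 * (\<Sum>X\<in>S. w X * frame_reward S tau r \<sigma> X (Suc m))"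
      using k by simp
    moreover have "(\<Sum>X\<in>S. w X * ((1 + \<epsilon>) * (2 * q X))) = 2 * ((1+\<epsilon>) * (\<Sum>X\<in>S. w X * q X))"
      by (simp add: sum_distrib_left algebra_simps)
    ultimately show ?thesis by simp
  qed
  have "2 * ((1+\<epsilon>) * (\<Sum>X\<in>S. w X * q X)) \<le> 2 * (\<Sum>X\<in>S. w X * frame_reward S tau r \<sigma> X (Suc m))"
    by (rule field_le_epsilon) (rule main)
  then show ?thesis unfolding w_def by simp
qed

end


lemma le_one_plus_sq: "(x::real) \<le> 1 + x^2"
proof (cases "x \<le> 1")
  case True then show ?thesis by (smt (verit) zero_le_power2)
next
  case False then have "x \<le> x * x" by simp
  then show ?thesis by (simp add: power2_eq_square)
qed

lemma max_sq: "(max 0 (x::real))^2 \<le> x^2"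
  by (cases "x \<le> 0") (auto simp: max_def)

lemma drift:
  fixes S :: "'a set" and q Bx :: "'a \<Rightarrow> real" and d a :: "nat \<Rightarrow> 'a \<Rightarrow> real"
  assumes fin: "finite S" and ne: "S \<noteq> {}" and qpos: "\<forall>X\<in>S. q X > 0"
    and d0: "\<forall>X. d 0 X = 0"
    and dS: "\<forall>k X. d (Suc k) X = max 0 (d k X + q X - a k X)"
    and bnd: "\<forall>k. \<forall>X\<in>S. \<bar>q X - a k X\<bar> \<le> Bx X"
    and eps: "\<epsilon> > 0"
    and neg: "\<forall>k. (1+\<epsilon>) * (\<Sum>X\<in>S. d k X * q X) \<le> (\<Sum>X\<in>S. d k X * a k X)"
  shows "\<exists>D. \<forall>k. \<forall>X\<in>S. d k X \<le> D"
proof -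
  have dnn: "0 \<le> d k X" for k X by (cases k) (auto simp: d0 dS)
  define B where "B = (\<Sum>X\<in>S. (Bx X)^2)"
  define qm where "qm = Min (q ` S)"
  have qm: "qm > 0" unfolding qm_def using fin ne qpos by auto
  have qmle: "X \<in> S \<Longrightarrow> qm \<le> q X" for X unfolding qm_def using fin by simp
  define D0 where "D0 = B / (2 * \<epsilon> * qm)"
  have B0: "0 \<le> B" unfolding B_def by (simp add: sum_nonneg)
  have D00: "0 \<le> D0" unfolding D0_def using B0 eps qm by simp
  define L where "L k = (\<Sum>X\<in>S. (d k X)^2)" for k
  define M where "M = D0^2 + B"
  have step: "L (Suc k) \<le> L k - 2 * \<epsilon> * (\<Sum>X\<in>S. d k X * q X) + B" for k
  proof -
    have t: "(d (Suc k) X)^2 \<le> (d k X)^2 + 2 * (d k X * q X - d k X * a k X) + (Bx X)^2" if X: "X \<in> S" for X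
    proof -
      have "(d (Suc k) X)^2 \<le> (d k X + (q X - a k X))^2"
      proof -
        have "d (Suc k) X = max 0 (d k X + (q X - a k X))" using dS by simp
        then show ?thesis by (simp only: max_sq)
      qed
      also have "... = (d k X)^2 + 2 * (d k X * q X - d k X * a k X) + (q X - a k X)^2"
        by (simp add: power2_eq_square algebra_simps)
      also have "(q X - a k X)^2 \<le> (Bx X)^2"
      proof -
        have "(q X - a k X)^2 = \<bar>q X - a k X\<bar>^2" by simp
        also have "... \<le> (Bx X)^2" using bnd X by (intro power_mono) auto
        finally show ?thesis .
      qed
      finally show ?thesis by simp
    qed
    have "L (Suc k) \<le> (\<Sum>X\<in>S. (d k X)^2 + 2 * (d k X * q X - d k X * a k X) + (Bx X)^2)"
      unfolding L_def using t by (intro sum_mono) auto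
    also have "... = L k + 2 * ((\<Sum>X\<in>S. d k X * q X) - (\<Sum>X\<in>S. d k X * a k X)) + B"
      unfolding L_def B_def by (simp add: sum.distrib sum_subtractf sum_distrib_left)
    also have "... \<le> L k - 2 * \<epsilon> * (\<Sum>X\<in>S. d k X * q X) + B"
      using neg[rule_format, of k] by (simp add: algebra_simps)
    finally show ?thesis .
  qed
  have LM: "L k \<le> M" for k
  proof (induction k)
    case 0 then show ?case unfolding L_def M_def using d0 B0 by simp
  next
    case (Suc k)
    have sq0: "0 \<le> (\<Sum>X\<in>S. d k X * q X)" using dnn qpos by (intro sum_nonneg) (simp add: less_imp_le)
    show ?case
    proof (cases "B \<le> 2 * \<epsilon> * (\<Sum>X\<in>S. d k X * q X)")
      case True then show ?thesis using step[of k] Suc by simp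
    next
      case False
      have "qm * (\<Sum>X\<in>S. d k X) = (\<Sum>X\<in>S. qm * d k X)" by (simp add: sum_distrib_left)
      also have "... \<le> (\<Sum>X\<in>S. d k X * q X)" using qmle dnn by (intro sum_mono) (metis mult.commute mult_right_mono)
      finally have "2 * \<epsilon> * qm * (\<Sum>X\<in>S. d k X) < B" using False eps
        by (smt (verit, best) mult_left_mono mult.assoc)
      then have sd: "(\<Sum>X\<in>S. d k X) \<le> D0" unfolding D0_def using eps qm
        by (simp add: field_simps)
      have dle: "X \<in> S \<Longrightarrow> d k X \<le> D0" for X
        using member_le_sum[of X S "d k"] dnn fin sd by fastforce
      have "L k \<le> (\<Sum>X\<in>S. D0 * d k X)" unfolding L_def
        using dle dnn by (intro sum_mono) (simp add: power2_eq_square mult_right_mono)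
      also have "... = D0 * (\<Sum>X\<in>S. d k X)" by (simp add: sum_distrib_left)
      also have "... \<le> D0 * D0" using sd D00 by (simp add: mult_left_mono)
      finally have "L k \<le> D0^2" by (simp add: power2_eq_square)
      then show ?thesis using step[of k] sq0 eps unfolding M_def
        by (smt (verit) mult_nonneg_nonneg)
    qed
  qed
  have "d k X \<le> 1 + M" if "X \<in> S" for k X
  proof -
    have "(d k X)^2 \<le> L k" unfolding L_def using member_le_sum[of X S "\<lambda>X. (d k X)^2"] fin that by simp
    then show ?thesis using LM[of k] le_one_plus_sq[of "d k X"] by simp
  qed
  then show ?thesis by blast
qed

context gm begin

lemma total_mono: "X \<in> S \<Longrightarrow> t' \<le> t \<Longrightarrow> total_reward tau r \<sigma> X t' \<le> total_reward tau r \<sigma> X t"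
  unfolding total_reward_def using slot_nn by (intro sum_mono2) auto

lemma bounded_fulfill:
  assumes D: "\<forall>k. \<forall>X\<in>S. debt S tau r q \<sigma> X k \<le> D" and D0: "0 \<le> D"
  shows "fulfills S tau r q \<sigma>"
  unfolding fulfills_def avg_reward_def
proof
  fix X assume X: "X \<in> S"
  have Tp: "T > 0" by (rule T_pos)
  define Q where "Q = q X"
  have Q: "Q > 0" using qpos X Q_def by simp
  have dk: "debt S tau r q \<sigma> X K \<ge> real K * Q - (\<Sum>k<K. frame_reward S tau r \<sigma> X (Suc k))" for K
  proof (induction K)
    case 0 then show ?case by simp
  next
    case (Suc K)
    have h: "debt S tau r q \<sigma> X (Suc K) \<ge> debt S tau r q \<sigma> X K + Q - frame_reward S tau r \<sigma> X (Suc K)"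
      by (simp add: Q_def)
    have e: "real (Suc K) * Q = real K * Q + Q" by (simp add: algebra_simps)
    show ?case unfolding e sum.lessThan_Suc using h Suc.IH by linarith
  qed
  have totK: "total_reward tau r \<sigma> X (K * T) \<ge> real K * Q - D" for K
  proof -
    have "debt S tau r q \<sigma> X K \<le> D" using D X by blast
    then show ?thesis using dk[of K] unfolding total_frames by linarith
  qed
  show "ereal (q X) \<le> liminf (\<lambda>t. ereal (total_reward tau r \<sigma> X t / (real t / real T)))"
    unfolding le_Liminf_iff
  proof (intro allI impI)
    fix y assume "y < ereal (q X)"
    then obtain z where z: "y < ereal z" "ereal z < ereal Q" using ereal_dense2 Q_def by blast
    have zQ: "z < Q" using z by simp
    define N where "N = nat \<lceil>(Q + D) * real T / (Q - z)\<rceil> + 1"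
    have "z < total_reward tau r \<sigma> X t / (real t / real T)" if t: "t \<ge> N" for t
    proof -
      define K where "K = t div T"
      have tpos: "real t > 0" using t unfolding N_def by simp
      have tN: "real t > (Q + D) * real T / (Q - z)" using t unfolding N_def by linarith
      have KTl: "K * T \<le> t" unfolding K_def by simp
      have t1: "t = K*T + t mod T" unfolding K_def by (rule div_mult_mod_eq[symmetric])
      have t2: "t mod T < T" using Tp by simp
      have KTg: "t < K * T + T" using t1 t2 by linarith
      have "real t < real (K * T + T)" using KTg by (simp only: of_nat_less_iff)
      then have KT: "real K * real T \<ge> real t - real T" by simp
      have tot: "total_reward tau r \<sigma> X t \<ge> real K * Q - D"
        using totK[of K] total_mono[OF X KTl, of \<sigma>] by linarith
      have "(Q + D) * real T < real t * (Q - z)" using tN zQ by (simp add: field_simps)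
      then have "real t * z < (real t - real T) * Q - D * real T" by (simp add: algebra_simps)
      also have "... \<le> (real K * real T) * Q - D * real T" using KT Q by (simp add: mult_right_mono)
      also have "... = (real K * Q - D) * real T" by (simp add: algebra_simps)
      also have "... \<le> total_reward tau r \<sigma> X t * real T" using tot Tp by (simp add: mult_right_mono)
      finally have "real t * z < total_reward tau r \<sigma> X t * real T" .
      then show ?thesis using tpos Tp by (simp add: field_simps)
    qed
    then have "eventually (\<lambda>t. ereal z < ereal (total_reward tau r \<sigma> X t / (real t / real T))) sequentially"
      unfolding eventually_sequentially by auto
    then show "eventually (\<lambda>t. y < ereal (total_reward tau r \<sigma> X t / (real t / real T))) sequentially"
      by eventually_elim (use z(1) in \<open>blast intro: order.strict_trans\<close>)
  qed
qed

end

theorem theorem9: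
  fixes S :: "'a set" and tau :: "'a \<Rightarrow> nat" and r :: "'a \<Rightarrow> nat \<Rightarrow> real"
    and q :: "'a \<Rightarrow> real" and \<sigma> :: "nat \<Rightarrow> 'a option"
  assumes "finite S"
    and "\<forall>X\<in>S. tau X > 0"
    and "\<forall>X\<in>S. \<forall>i. 1 \<le> i \<and> i < tau X \<longrightarrow> r X (i + 1) \<le> r X i"
    and "\<forall>X\<in>S. \<forall>i. 1 \<le> i \<and> i \<le> tau X \<longrightarrow> 0 \<le> r X i"
    and "\<forall>X\<in>S. q X > 0"
    and "strictly_feasible S tau r (\<lambda>X. 2 * q X)"
    and "greedy_maximizer_schedule S tau r q \<sigma>"
  shows "fulfills S tau r q \<sigma>"
proof (cases "S = {}")
  case True then show ?thesis unfolding fulfills_def by simp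
next
  case ne: False
  interpret gm S tau r q using assms(1-5) by unfold_locales
  obtain \<epsilon> where eps: "\<epsilon> > 0" and "feasible S tau r (\<lambda>X. (1+\<epsilon>) * (2 * q X))"
    using assms(6) unfolding strictly_feasible_def by blast
  then obtain \<rho> where vr: "valid_schedule S \<rho>" and fr: "fulfills S tau r (\<lambda>X. (1 + \<epsilon>) * (2 * q X)) \<rho>"
    unfolding feasible_def by blast
  have "\<exists>D. \<forall>k. \<forall>X\<in>S. debt S tau r q \<sigma> X k \<le> D"
  proof (rule drift[where q=q and d="\<lambda>k X. debt S tau r q \<sigma> X k"
        and a="\<lambda>k X. frame_reward S tau r \<sigma> X (Suc k)" and Bx="\<lambda>X. q X + real T * r X 1" and \<epsilon>=\<epsilon>])
    show "finite S" by (rule fin)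
    show "S \<noteq> {}" by (rule ne)
    show "\<forall>X\<in>S. 0 < q X" by (rule qpos)
    show "\<forall>X. debt S tau r q \<sigma> X 0 = 0" by simp
    show "\<forall>k X. debt S tau r q \<sigma> X (Suc k) = max 0 (debt S tau r q \<sigma> X k + q X - frame_reward S tau r \<sigma> X (Suc k))"
      by simp
    show "\<forall>k. \<forall>X\<in>S. \<bar>q X - frame_reward S tau r \<sigma> X (Suc k)\<bar> \<le> q X + real T * r X 1"
    proof (intro allI ballI)
      fix k X assume X: "X \<in> S"
      have "0 \<le> frame_reward S tau r \<sigma> X (Suc k)" "frame_reward S tau r \<sigma> X (Suc k) \<le> real T * r X 1"
        "0 < q X" "0 \<le> real T * r X 1"
        using FR_nn[OF X] FR_le[OF X] qpos X r1_nn[OF X] by auto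
      then show "\<bar>q X - frame_reward S tau r \<sigma> X (Suc k)\<bar> \<le> q X + real T * r X 1" by (simp add: abs_le_iff)
    qed
    show "0 < \<epsilon>" by (rule eps)
    show "\<forall>k. (1 + \<epsilon>) * (\<Sum>X\<in>S. debt S tau r q \<sigma> X k * q X)
        \<le> (\<Sum>X\<in>S. debt S tau r q \<sigma> X k * frame_reward S tau r \<sigma> X (Suc k))"
      using greedy_frame[OF assms(7) vr fr] by blast
  qed
  then obtain D where D: "\<forall>k. \<forall>X\<in>S. debt S tau r q \<sigma> X k \<le> D" by blast
  have D': "\<forall>k. \<forall>X\<in>S. debt S tau r q \<sigma> X k \<le> max D 0" using D by (meson max.coboundedI1)
  show ?thesis by (rule bounded_fulfill[OF D']) simp
qed

end
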